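(* Consider a run of Dynamic A* (with \texttt{reeval} true or false) using a dyn-safe dynamic heuristic, and an iteration $i$ of it. Let $s$ be a state settled in iteration $i$, and let $s'$ be a state with $h^*(s')<\infty$ such that there is an optimal path $\langle t_1,\dots,t_n\rangle$ from $s_I$ to $s'$ with $t_n=\langle s,\ell,s'\rangle$. Then at the beginning of iteration $i$, either Open contains an entry $\langle s',\hat g,\cdot\rangle$ with $\hat g=g^*(s')$, or $s'$ is settled in iteration $i$.
   Context: A transition system is $\mathcal T=\langle S,L,c,T,s_I,S_G\rangle$ with finite states $S$, finite labels $L$, cost function $c:L\to\mathbb R_{\ge0}$, transitions $T\subseteq S\times L\times S$, initial state $s_I$, goal states $S_G\subseteq S$. Paths, costs, solutions (paths from $s_I$ to a goal state) are as usual; $g^*(s)$ is the cost of an optimal path from $s_I$ to $s$ and $h^*(s)$ the minimal cost of a path from $s$ to a goal ($\infty$ if none). An information source $\sigma$ consists of a set $\mathcal I_\sigma$, $\iota_0^\sigma\in\mathcal I_\sigma$, $\mathrm{update}_\sigma:\mathcal I_\sigma\times T\to\mathcal I_\sigma$, $\mathrm{refine}_\sigma:\mathcal I_\sigma\times S\to\mathcal I_\sigma$. Reachable information: $\iota_n$ is reachable if obtained from $\iota_0^\sigma$ by a sequence of refine steps on states and update steps on transitions $e_1,\dots,e_n$, where each refined state and each origin of an updated transition is $s_I$ or the target of an earlier updated transition. A dynamic heuristic over $\sigma$ is $h:S\times\mathcal I_\sigma\to\mathbb R_{\ge0}\cup\{\infty\}$; it is dyn-safe if $h(s,\iota)=\infty$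 implies $h^*(s)=\infty$ for all $s$ and reachable $\iota$. Parent source $\sigma_p$: $\mathcal I_{\sigma_p}$ = partial functions $S\rightharpoonup\mathbb R_{\ge0}\times(T\cup\{\bot\})$; $\iota_0=\{s_I\mapsto\langle0,\bot\rangle\}$; refine is the identity; $\mathrm{update}(\iota,\langle s,\ell,s'\rangle)$ with $\iota(s)=\langle g,\cdot\rangle$ changes only $s'$, setting it to $\langle g+c(\ell),\langle s,\ell,s'\rangle\rangle$ if $\iota(s')$ is undefined or has $g$-component $\ge g+c(\ell)$, otherwise unchanged. Dynamic A* takes $\mathcal T$, sources $\sigma_p,\sigma_h$, a dynamic heuristic $h$ over $\sigma_h$ and a Boolean flag \texttt{reeval}. Notation: at any moment $g(s)$ is the $g$-component of the current $\mathcal I(\sigma_p)(s)$ and $h(s)$ denotes $h(s,\mathcal I(\sigma_h))$ for the current $\mathcal I(\sigma_h)$. Open is a priority queue of entries $\langle s,g,h\rangle$ (duplicates allowed), popped by minimal stored value $g+h$ (ties arbitrary). Algorithm: 1. $\mathcal I(\sigma):=\iota_0^\sigma$ for both sources; $S_{\mathrm{known}}:=\{s_I\}$; Closed $:=\emptyset$; Open empty. If $h(s_I)<\infty$ insert $\langle s_I,g(s_I),h(s_I)\rangle$. 2. While Open is nonempty: pop an entry $\langle s,\hat g,\hat h\rangle$ of minimal $\hat g+\hat h$. If $s\in$ Closed, continue with the next iteration. Otherwise set $\mathcal I(\sigma):=\mathrm{refine}_\sigma(\mathcal I(\sigma),s)$ for both sources. If \texttt{reeval} is true and $\hat h<h(s)$: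 if $h(s)<\infty$ insert $\langle s,g(s),h(s)\rangle$; continue with the next iteration (this is a re-evaluation). Otherwise add $s$ to Closed ($s$ is expanded). If $s\in S_G$, return the path obtained by following the parent pointers of $\mathcal I(\sigma_p)$ from $s$ back to $s_I$. Otherwise, for each $t=\langle s,\ell,s'\rangle\in T$ in some order: let $old:=g(s')$ if $s'\in S_{\mathrm{known}}$ and undefined otherwise; set $\mathcal I(\sigma):=\mathrm{update}_\sigma(\mathcal I(\sigma),t)$ for both sources; add $s'$ to $S_{\mathrm{known}}$; if $h(s')=\infty$ skip $s'$; else if $old$ is undefined insert $\langle s',g(s'),h(s')\rangle$; else if $old>g(s')$, remove $s'$ from Closed if it is there (reopening) and insert $\langle s',g(s'),h(s')\rangle$. 3. Return "unsolvable". Times: the iterations of the while loop are numbered $i=1,2,\dots$ (iteration $i$ begins just before its pop); within iteration $i$ a step counter $j$ is $0$ at the start, becomes $1$ after the refine step, and increases by $1$ after each update step on a successor transition. Time $\langle i,j\rangle$ (time $\langle0,0\rangle$ is the initialization) is ordered lexicographically, and $g^{i,j}(s)$, $h^{i,j}(s)$ denote $g(s)$ and $h(s)$ with the information current at that time. A state $s$ is settled in iteration $i$ if it was expanded (added to Closed) in some iteration $i'<i$ with $g^{i',0}(s)=g^*(s)$. *)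

theory Defs
  imports Main "HOL-Library.Extended_Real" "HOL-Library.Multiset"
begin

type_synonym ('s,'l) trans = "'s \<times> 'l \<times> 's"

definition trans_sys ::
  "'s set \<Rightarrow> 'l set \<Rightarrow> ('l \<Rightarrow> real) \<Rightarrow> ('s,'l) trans set \<Rightarrow> 's \<Rightarrow> 's set \<Rightarrow> bool" where
  "trans_sys S L c T sI SG \<longleftrightarrow> finite S \<and> finite L \<and> (\<forall>l\<in>L. c l \<ge> 0)
     \<and> T \<subseteq> S \<times> L \<times> S \<and> sI \<in> S \<and> SG \<subseteq> S"

fun is_path :: "('s,'l) trans set \<Rightarrow> 's \<Rightarrow> ('s,'l) trans list \<Rightarrow> 's \<Rightarrow> bool" where
  "is_path T s [] s' \<longleftrightarrow> s = s'"
| "is_path T s ((a,l,b) # ts) s' \<longleftrightarrow> a = s \<and> (a,l,b) \<in> T \<and> is_path T b ts s'"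

definition path_cost :: "('l \<Rightarrow> real) \<Rightarrow> ('s,'l) trans list \<Rightarrow> real" where
  "path_cost c ts = sum_list (map (\<lambda>(_,l,_). c l) ts)"

text \<open>g* and h* (Inf of the empty set is \<infinity>).\<close>
definition gstar :: "('s,'l) trans set \<Rightarrow> ('l \<Rightarrow> real) \<Rightarrow> 's \<Rightarrow> 's \<Rightarrow> ereal" where
  "gstar T c sI s = Inf {ereal (path_cost c ts) | ts. is_path T sI ts s}"

definition hstar :: "('s,'l) trans set \<Rightarrow> ('l \<Rightarrow> real) \<Rightarrow> 's set \<Rightarrow> 's \<Rightarrow> ereal" where
  "hstar T c SG s = Inf {ereal (path_cost c ts) | ts s'. is_path T s ts s' \<and> s' \<in> SG}"

text \<open>Reachable information of an information source (iota0, update, refine),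
  tracking the set K of states that are s_I or targets of earlier updated transitions.\<close>
inductive reach_info ::
  "('s,'l) trans set \<Rightarrow> 's \<Rightarrow> 'i \<Rightarrow> ('i \<Rightarrow> ('s,'l) trans \<Rightarrow> 'i) \<Rightarrow> ('i \<Rightarrow> 's \<Rightarrow> 'i)
    \<Rightarrow> 'i \<Rightarrow> 's set \<Rightarrow> bool"
  for T sI iota0 upd refine where
  init: "reach_info T sI iota0 upd refine iota0 {sI}"
| refine: "reach_info T sI iota0 upd refine \<iota> K \<Longrightarrow> s \<in> K
           \<Longrightarrow> reach_info T sI iota0 upd refine (refine \<iota> s) K"
| update: "reach_info T sI iota0 upd refine \<iota> K \<Longrightarrow> (s,l,s') \<in> T \<Longrightarrow> s \<in> K
           \<Longrightarrow> reach_info T sI iota0 upd refine (upd \<iota> (s,l,s')) (insert s' K)"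

definition dyn_safe ::
  "'s set \<Rightarrow> ('s,'l) trans set \<Rightarrow> ('l \<Rightarrow> real) \<Rightarrow> 's \<Rightarrow> 's set
   \<Rightarrow> 'i \<Rightarrow> ('i \<Rightarrow> ('s,'l) trans \<Rightarrow> 'i) \<Rightarrow> ('i \<Rightarrow> 's \<Rightarrow> 'i) \<Rightarrow> ('s \<Rightarrow> 'i \<Rightarrow> ereal) \<Rightarrow> bool" where
  "dyn_safe S T c sI SG iota0 upd refine h \<longleftrightarrow>
     (\<forall>\<iota> K. reach_info T sI iota0 upd refine \<iota> K \<longrightarrow>
        (\<forall>s\<in>S. h s \<iota> = \<infinity> \<longrightarrow> hstar T c SG s = \<infinity>))"

definition dyn_heuristic :: "('s \<Rightarrow> 'i \<Rightarrow> ereal) \<Rightarrow> bool" where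
  "dyn_heuristic h \<longleftrightarrow> (\<forall>s \<iota>. h s \<iota> \<ge> 0)"

text \<open>Parent source sigma_p: information is a partial map to (g, parent transition or bot).\<close>
type_synonym ('s,'l) pinfo = "'s \<Rightarrow> (real \<times> ('s,'l) trans option) option"

definition upd_p :: "('l \<Rightarrow> real) \<Rightarrow> ('s,'l) pinfo \<Rightarrow> ('s,'l) trans \<Rightarrow> ('s,'l) pinfo" where
  "upd_p c \<iota> t = (case t of (s,l,s') \<Rightarrow>
     (case \<iota> s of None \<Rightarrow> \<iota>
      | Some (g,_) \<Rightarrow> if \<iota> s' = None \<or> g + c l \<le> fst (the (\<iota> s'))
                      then \<iota>(s' \<mapsto> (g + c l, Some t)) else \<iota>))"

text \<open>Configuration of Dynamic A*; hist records, for every expansion, the expanded state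
  together with its g-value at the beginning of that iteration.\<close>
record ('s,'l,'i) cfg =
  pinf :: "('s,'l) pinfo"
  hinf :: 'i
  known :: "'s set"
  closed :: "'s set"
  opn :: "('s \<times> real \<times> ereal) multiset"
  hist :: "('s \<times> real) list"

definition gval :: "('s,'l,'i,'x) cfg_scheme \<Rightarrow> 's \<Rightarrow> real" where
  "gval C s = fst (the (pinf C s))"

definition prio :: "'s \<times> real \<times> ereal \<Rightarrow> ereal" where
  "prio e = (case e of (s,g,hh) \<Rightarrow> ereal g + hh)"

definition da_init :: "'s \<Rightarrow> 'i \<Rightarrow> ('s \<Rightarrow> 'i \<Rightarrow> ereal) \<Rightarrow> ('s,'l,'i) cfg" where
  "da_init sI iota0 h =
     \<lparr> pinf = [sI \<mapsto> (0, None)], hinf = iota0, known = {sI}, closed = {},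
       opn = (if h sI iota0 < \<infinity> then {#(sI, 0, h sI iota0)#} else {#}), hist = [] \<rparr>"

definition succ_step ::
  "('l \<Rightarrow> real) \<Rightarrow> ('i \<Rightarrow> ('s,'l) trans \<Rightarrow> 'i) \<Rightarrow> ('s \<Rightarrow> 'i \<Rightarrow> ereal)
    \<Rightarrow> ('s,'l) trans \<Rightarrow> ('s,'l,'i) cfg \<Rightarrow> ('s,'l,'i) cfg" where
  "succ_step c upd h t C = (case t of (s,l,s') \<Rightarrow>
     (let old = (if s' \<in> known C then Some (gval C s') else None);
          C1 = C\<lparr>pinf := upd_p c (pinf C) t, hinf := upd (hinf C) t, known := insert s' (known C)\<rparr>;
          hv = h s' (hinf C1);
          gn = gval C1 s'
      in if hv = \<infinity> then C1
         else if old = None then C1\<lparr>opn := opn C1 + {#(s', gn, hv)#}\<rparr>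
         else if the old > gn then C1\<lparr>closed := closed C1 - {s'}, opn := opn C1 + {#(s', gn, hv)#}\<rparr>
         else C1))"

text \<open>Nondeterminism covers tie-breaking and the order of successor transitions.
  An iteration expanding a goal state returns, hence has no successor configuration.\<close>
inductive da_step ::
  "('l \<Rightarrow> real) \<Rightarrow> ('s,'l) trans set \<Rightarrow> 's set \<Rightarrow> ('i \<Rightarrow> ('s,'l) trans \<Rightarrow> 'i) \<Rightarrow> ('i \<Rightarrow> 's \<Rightarrow> 'i)
    \<Rightarrow> ('s \<Rightarrow> 'i \<Rightarrow> ereal) \<Rightarrow> bool \<Rightarrow> ('s,'l,'i) cfg \<Rightarrow> ('s,'l,'i) cfg \<Rightarrow> bool"
  for c T SG upd refine h reeval where
  skip: "\<lbrakk> e \<in># opn C; \<forall>e'\<in>#opn C. prio e \<le> prio e'; e = (s, gh, hh); s \<in> closed C \<rbrakk>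
     \<Longrightarrow> da_step c T SG upd refine h reeval C (C\<lparr>opn := opn C - {#e#}\<rparr>)"
| reeval: "\<lbrakk> e \<in># opn C; \<forall>e'\<in>#opn C. prio e \<le> prio e'; e = (s, gh, hh); s \<notin> closed C;
             \<iota>1 = refine (hinf C) s; reeval; hh < h s \<iota>1 \<rbrakk>
     \<Longrightarrow> da_step c T SG upd refine h reeval C
           (C\<lparr>hinf := \<iota>1, opn := opn C - {#e#} +
               (if h s \<iota>1 < \<infinity> then {#(s, gval C s, h s \<iota>1)#} else {#})\<rparr>)"
| expand: "\<lbrakk> e \<in># opn C; \<forall>e'\<in>#opn C. prio e \<le> prio e'; e = (s, gh, hh); s \<notin> closed C;
             \<iota>1 = refine (hinf C) s; \<not> (reeval \<and> hh < h s \<iota>1); s \<notin> SG;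
             distinct ts; set ts = {t \<in> T. fst t = s} \<rbrakk>
     \<Longrightarrow> da_step c T SG upd refine h reeval C
           (fold (succ_step c upd h) ts
              (C\<lparr>hinf := \<iota>1, opn := opn C - {#e#}, closed := insert s (closed C),
                  hist := hist C @ [(s, gval C s)]\<rparr>))"

text \<open>s is settled at the beginning of the iteration whose starting configuration is C.\<close>
definition settled :: "('s,'l) trans set \<Rightarrow> ('l \<Rightarrow> real) \<Rightarrow> 's \<Rightarrow> ('s,'l,'i) cfg \<Rightarrow> 's \<Rightarrow> bool" where
  "settled T c sI C s \<longleftrightarrow> (\<exists>g. (s, g) \<in> set (hist C) \<and> ereal g = gstar T c sI s)"

end

theory Submission imports Defs begin

lemma is_path_append[simp]:
  "is_path T x (p @ q) z \<longleftrightarrow> (\<exists>y. is_path T x p y \<and> is_path T y q z)"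
  by (induction p arbitrary: x) auto

lemma path_cost_append[simp]: "path_cost c (p @ q) = path_cost c p + path_cost c q"
  by (simp add: path_cost_def)

lemma path_cost_single[simp]: "path_cost c [(a,l,b)] = c l"
  by (simp add: path_cost_def)

lemma gstar_le: "is_path T sI p y \<Longrightarrow> gstar T c sI y \<le> ereal (path_cost c p)"
  unfolding gstar_def by (rule Inf_lower) blast

context
  fixes S :: "'s set" and L :: "'l set" and c :: "'l \<Rightarrow> real"
    and T :: "('s,'l) trans set" and sI :: 's and SG :: "'s set"
    and iota0 :: 'i and upd :: "'i \<Rightarrow> ('s,'l) trans \<Rightarrow> 'i" and refine :: "'i \<Rightarrow> 's \<Rightarrow> 'i"
    and h :: "'s \<Rightarrow> 'i \<Rightarrow> ereal"
  assumes TS: "T \<subseteq> S \<times> L \<times> S" and sIS: "sI \<in> S"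
    and ds: "dyn_safe S T c sI SG iota0 upd refine h"
begin

definition inv0 :: "('s,'l,'i) cfg \<Rightarrow> bool" where "inv0 C \<longleftrightarrow>
  dom (pinf C) = known C \<and> known C \<subseteq> S \<and> closed C \<subseteq> known C \<and>
  (\<forall>e\<in>#opn C. fst e \<in> known C) \<and>
  reach_info T sI iota0 upd refine (hinf C) (known C) \<and>
  (\<forall>y\<in>known C. \<exists>p. is_path T sI p y \<and> path_cost c p = gval C y) \<and>
  (\<forall>x\<in>known C. x \<notin> closed C \<longrightarrow> hstar T c SG x < \<infinity> \<longrightarrow> (\<exists>hh. (x, gval C x, hh) \<in># opn C)) \<and>
  (\<forall>x\<in>closed C. hstar T c SG x < \<infinity> \<longrightarrow> (x, gval C x) \<in> set (hist C))"

definition inv3 :: "('s,'l,'i) cfg \<Rightarrow> bool" where "inv3 C \<longleftrightarrow>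
  (\<forall>x g l y. (x,g) \<in> set (hist C) \<longrightarrow> (x,l,y) \<in> T \<longrightarrow> y \<in> known C \<and> gval C y \<le> g + c l)"

lemma hfin: "reach_info T sI iota0 upd refine \<iota> K \<Longrightarrow> x \<in> S \<Longrightarrow> hstar T c SG x < \<infinity> \<Longrightarrow> h x \<iota> \<noteq> \<infinity>"
  using ds unfolding dyn_safe_def by auto

definition mono_cfg :: "('s,'l,'i) cfg \<Rightarrow> ('s,'l,'i) cfg \<Rightarrow> bool" where
  "mono_cfg C C' \<longleftrightarrow> known C \<subseteq> known C' \<and> (\<forall>y\<in>known C. gval C' y \<le> gval C y) \<and> hist C' = hist C"

lemma succ_step_inv:
  assumes inv: "inv0 C" and tT: "(a,l,b) \<in> T" and aK: "a \<in> known C"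
  shows "inv0 (succ_step c upd h (a,l,b) C) \<and> mono_cfg C (succ_step c upd h (a,l,b) C)
     \<and> b \<in> known (succ_step c upd h (a,l,b) C)
     \<and> gval (succ_step c upd h (a,l,b) C) b \<le> gval C a + c l"
proof -
  from inv aK obtain ga pa where pa: "pinf C a = Some (ga, pa)" unfolding inv0_def by fastforce
  have gaa: "gval C a = ga" using pa by (simp add: gval_def)
  define p' where "p' = upd_p c (pinf C) (a,l,b)"
  have p'o: "\<And>y. y \<noteq> b \<Longrightarrow> p' y = pinf C y" unfolding p'_def upd_p_def using pa by auto
  have p'b: "p' b \<noteq> None" unfolding p'_def upd_p_def using pa by auto
  have p'a: "fst (the (p' b)) \<le> ga + c l" unfolding p'_def upd_p_def using pa by auto
  have p'le: "pinf C b \<noteq> None \<Longrightarrow> fst (the (p' b)) \<le> fst (the (pinf C b))"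
    unfolding p'_def upd_p_def using pa by auto
  have p'p: "p' b = pinf C b \<or> fst (the (p' b)) = ga + c l"
    unfolding p'_def upd_p_def using pa by auto
  define C1 where "C1 = C\<lparr>pinf := p', hinf := upd (hinf C) (a,l,b), known := insert b (known C)\<rparr>"
  have bS: "b \<in> S" using tT TS by auto
  have ri: "reach_info T sI iota0 upd refine (hinf C1) (known C1)"
    using inv aK tT unfolding C1_def inv0_def by (auto intro: reach_info.update)
  have hv: "hstar T c SG b < \<infinity> \<Longrightarrow> h b (hinf C1) \<noteq> \<infinity>" using hfin[OF ri bS] by blast
  have g1o: "\<And>y. y \<noteq> b \<Longrightarrow> gval C1 y = gval C y" by (simp add: C1_def gval_def p'o)
  have g1a: "gval C1 b \<le> ga + c l" by (simp add: C1_def gval_def p'a)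
  have kdom: "\<And>y. y \<in> known C \<Longrightarrow> pinf C y \<noteq> None" using inv unfolding inv0_def by (metis domIff)
  have g1le: "b \<in> known C \<Longrightarrow> gval C1 b \<le> gval C b"
    using p'le kdom by (simp add: C1_def gval_def)
  have paths: "\<forall>y\<in>known C1. \<exists>p. is_path T sI p y \<and> path_cost c p = gval C1 y"
  proof
    fix y assume y: "y \<in> known C1"
    show "\<exists>p. is_path T sI p y \<and> path_cost c p = gval C1 y"
    proof (cases "y = b \<and> p' b \<noteq> pinf C b")
      case True
      from inv aK obtain p where "is_path T sI p a" "path_cost c p = gval C a" unfolding inv0_def by blast
      then show ?thesis using True p'p tT gaa
        by (intro exI[of _ "p @ [(a,l,b)]"]) (auto simp: C1_def gval_def)
    next
      case False
      then have "pinf C1 y = pinf C y" by (cases "y = b") (auto simp: C1_def p'o)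
      moreover have "y \<in> known C"
      proof -
        have dk: "dom (pinf C) = known C" using inv unfolding inv0_def by blast
        show ?thesis using False y p'b dk unfolding C1_def by (auto simp: dom_def)
      qed
      ultimately show ?thesis using inv unfolding inv0_def gval_def by auto
    qed
  qed
  have eq: "succ_step c upd h (a,l,b) C =
     (if h b (hinf C1) = \<infinity> then C1
      else if b \<notin> known C then C1\<lparr>opn := opn C1 + {#(b, gval C1 b, h b (hinf C1))#}\<rparr>
      else if gval C b > gval C1 b then C1\<lparr>closed := closed C1 - {b}, opn := opn C1 + {#(b, gval C1 b, h b (hinf C1))#}\<rparr>
      else C1)"
    unfolding succ_step_def Let_def C1_def p'_def by simp
  have dp: "dom p' = insert b (dom (pinf C))"
  proof (rule set_eqI)
    fix y show "y \<in> dom p' \<longleftrightarrow> y \<in> insert b (dom (pinf C))"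
      using p'b p'o by (cases "y = b") (auto simp: domIff)
  qed
  have dom1: "dom (pinf C1) = known C1" using inv dp unfolding C1_def inv0_def by simp
  have kS1: "known C1 \<subseteq> S" using inv bS unfolding C1_def inv0_def by auto
  have cl1: "closed C1 \<subseteq> known C1" using inv unfolding C1_def inv0_def by auto
  have op1: "\<forall>e\<in>#opn C1. fst e \<in> known C1" using inv unfolding C1_def inv0_def by auto
  have I1: "\<forall>x\<in>known C. x \<notin> closed C \<longrightarrow> hstar T c SG x < \<infinity> \<longrightarrow> (\<exists>hh. (x, gval C x, hh) \<in># opn C)"
    using inv unfolding inv0_def by blast
  have I2: "\<forall>x\<in>closed C. hstar T c SG x < \<infinity> \<longrightarrow> (x, gval C x) \<in> set (hist C)"
    using inv unfolding inv0_def by blast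
  have clk: "closed C \<subseteq> known C" using inv unfolding inv0_def by blast
  have [simp]: "closed C1 = closed C" "opn C1 = opn C" "hist C1 = hist C" "known C1 = insert b (known C)"
    by (simp_all add: C1_def)
  define C' where "C' = succ_step c upd h (a,l,b) C"
  have com: "pinf C' = pinf C1 \<and> known C' = known C1 \<and> hist C' = hist C \<and> hinf C' = hinf C1"
    unfolding C'_def eq by simp
  then have gv': "gval C' = gval C1" by (simp add: gval_def fun_eq_iff)
  have gm: "\<forall>y\<in>known C. gval C' y \<le> gval C y"
  proof
    fix y assume "y \<in> known C" then show "gval C' y \<le> gval C y"
      using gv' g1o g1le by (cases "y = b") auto
  qed
  have mono: "mono_cfg C C'" unfolding mono_cfg_def using com gm by auto
  have bk: "b \<in> known C'" using com by simp
  have gb: "gval C' b \<le> gval C a + c l" using gv' g1a gaa by simp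
  have gen: "\<lbrakk>closed C' \<subseteq> known C'; \<forall>e\<in>#opn C'. fst e \<in> known C';
     \<forall>x\<in>known C'. x \<notin> closed C' \<longrightarrow> hstar T c SG x < \<infinity> \<longrightarrow> (\<exists>hh. (x, gval C1 x, hh) \<in># opn C');
     \<forall>x\<in>closed C'. hstar T c SG x < \<infinity> \<longrightarrow> (x, gval C1 x) \<in> set (hist C')\<rbrakk> \<Longrightarrow> inv0 C'"
    unfolding inv0_def gv' using com dom1 kS1 ri paths by simp
  have "inv0 C'"
  proof (cases "h b (hinf C1) = \<infinity>")
    case True
    then have C': "C' = C1" unfolding C'_def eq by simp
    have nb: "hstar T c SG b < \<infinity> \<Longrightarrow> False" using hv True by blast
    show ?thesis
    proof (rule gen)
      show "closed C' \<subseteq> known C'" using clk by (auto simp: C')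
      show "\<forall>e\<in>#opn C'. fst e \<in> known C'" using op1 by (simp add: C')
      show "\<forall>x\<in>known C'. x \<notin> closed C' \<longrightarrow> hstar T c SG x < \<infinity> \<longrightarrow> (\<exists>hh. (x, gval C1 x, hh) \<in># opn C')"
      proof (intro ballI impI)
        fix x assume "x \<in> known C'" "x \<notin> closed C'" "hstar T c SG x < \<infinity>"
        then show "\<exists>hh. (x, gval C1 x, hh) \<in># opn C'" using nb I1 g1o by (cases "x = b") (auto simp: C')
      qed
      show "\<forall>x\<in>closed C'. hstar T c SG x < \<infinity> \<longrightarrow> (x, gval C1 x) \<in> set (hist C')"
      proof (intro ballI impI)
        fix x assume "x \<in> closed C'" "hstar T c SG x < \<infinity>"
        then show "(x, gval C1 x) \<in> set (hist C')" using nb I2 g1o by (cases "x = b") (auto simp: C')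
      qed
    qed
  next
    case hf: False
    show ?thesis
    proof (cases "b \<in> known C")
      case False
      then have C': "C' = C1\<lparr>opn := opn C + {#(b, gval C1 b, h b (hinf C1))#}\<rparr>"
        unfolding C'_def eq using hf by simp
      show ?thesis
      proof (rule gen)
        show "closed C' \<subseteq> known C'" using clk by (auto simp: C')
        show "\<forall>e\<in>#opn C'. fst e \<in> known C'" using op1 by (auto simp: C')
        show "\<forall>x\<in>known C'. x \<notin> closed C' \<longrightarrow> hstar T c SG x < \<infinity> \<longrightarrow> (\<exists>hh. (x, gval C1 x, hh) \<in># opn C')"
        proof (intro ballI impI)
          fix x assume "x \<in> known C'" "x \<notin> closed C'" "hstar T c SG x < \<infinity>"
          then show "\<exists>hh. (x, gval C1 x, hh) \<in># opn C'" using I1 g1o by (cases "x = b") (auto simp: C')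
        qed
        show "\<forall>x\<in>closed C'. hstar T c SG x < \<infinity> \<longrightarrow> (x, gval C1 x) \<in> set (hist C')"
        proof (intro ballI impI)
          fix x assume "x \<in> closed C'" "hstar T c SG x < \<infinity>"
          then show "(x, gval C1 x) \<in> set (hist C')" using False clk I2 g1o by (cases "x = b") (auto simp: C')
        qed
      qed
    next
      case True
      show ?thesis
      proof (cases "gval C b > gval C1 b")
        case gt: True
        then have C': "C' = C1\<lparr>closed := closed C - {b}, opn := opn C + {#(b, gval C1 b, h b (hinf C1))#}\<rparr>"
          unfolding C'_def eq using hf True by simp
        show ?thesis
        proof (rule gen)
          show "closed C' \<subseteq> known C'" using clk by (auto simp: C')
          show "\<forall>e\<in>#opn C'. fst e \<in> known C'" using op1 by (auto simp: C')
          show "\<forall>x\<in>known C'. x \<notin> closed C' \<longrightarrow> hstar T c SG x < \<infinity> \<longrightarrow> (\<exists>hh. (x, gval C1 x, hh) \<in># opn C')"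
          proof (intro ballI impI)
            fix x assume "x \<in> known C'" "x \<notin> closed C'" "hstar T c SG x < \<infinity>"
            then show "\<exists>hh. (x, gval C1 x, hh) \<in># opn C'" using I1 g1o by (cases "x = b") (auto simp: C')
          qed
          show "\<forall>x\<in>closed C'. hstar T c SG x < \<infinity> \<longrightarrow> (x, gval C1 x) \<in> set (hist C')"
          proof (intro ballI impI)
            fix x assume "x \<in> closed C'" "hstar T c SG x < \<infinity>"
            then show "(x, gval C1 x) \<in> set (hist C')" using I2 g1o by (cases "x = b") (auto simp: C')
          qed
        qed
      next
        case False
        then have C': "C' = C1" unfolding C'_def eq using hf True by simp
        have "gval C1 b = gval C b" using False g1le True by simp
        then have ge: "\<And>x. gval C1 x = gval C x" using g1o by metis
        show ?thesis
        proof (rule gen)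
          show "closed C' \<subseteq> known C'" using clk by (auto simp: C')
          show "\<forall>e\<in>#opn C'. fst e \<in> known C'" using op1 by (simp add: C')
          show "\<forall>x\<in>known C'. x \<notin> closed C' \<longrightarrow> hstar T c SG x < \<infinity> \<longrightarrow> (\<exists>hh. (x, gval C1 x, hh) \<in># opn C')"
            using I1 True ge by (simp add: C' insert_absorb)
          show "\<forall>x\<in>closed C'. hstar T c SG x < \<infinity> \<longrightarrow> (x, gval C1 x) \<in> set (hist C')"
            using I2 ge by (simp add: C')
        qed
      qed
    qed
  qed
  then show ?thesis using mono bk gb unfolding C'_def by blast
qed


lemma mono_trans: "mono_cfg A B \<Longrightarrow> mono_cfg B D \<Longrightarrow> mono_cfg A D"
proof -
  assume ab: "mono_cfg A B" and bd: "mono_cfg B D"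
  have k: "known A \<subseteq> known D" using ab bd unfolding mono_cfg_def by blast
  have g: "\<forall>y\<in>known A. gval D y \<le> gval A y"
  proof
    fix y assume y: "y \<in> known A"
    then have yb: "y \<in> known B" using ab unfolding mono_cfg_def by blast
    have "gval D y \<le> gval B y" using bd yb unfolding mono_cfg_def by blast
    also have "gval B y \<le> gval A y" using ab y unfolding mono_cfg_def by blast
    finally show "gval D y \<le> gval A y" .
  qed
  show ?thesis using k g ab bd unfolding mono_cfg_def by simp
qed

lemma fold_inv:
  "inv0 C \<Longrightarrow> set ts \<subseteq> T \<Longrightarrow> (\<forall>t\<in>set ts. fst t = a) \<Longrightarrow> a \<in> known C \<Longrightarrow>
   inv0 (fold (succ_step c upd h) ts C) \<and> mono_cfg C (fold (succ_step c upd h) ts C) \<and>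
   (\<forall>x l y. (x,l,y) \<in> set ts \<longrightarrow> y \<in> known (fold (succ_step c upd h) ts C)
        \<and> gval (fold (succ_step c upd h) ts C) y \<le> gval C a + c l)"
proof (induction ts arbitrary: C)
  case Nil
  then show ?case by (simp add: mono_cfg_def)
next
  case (Cons t ts)
  obtain x l b where t: "t = (x,l,b)" by (cases t) auto
  with Cons.prems have xa: "x = a" and tT: "(a,l,b) \<in> T" by auto
  define C2 where "C2 = succ_step c upd h (a,l,b) C"
  have s2: "inv0 C2 \<and> mono_cfg C C2 \<and> b \<in> known C2 \<and> gval C2 b \<le> gval C a + c l"
    unfolding C2_def using succ_step_inv[OF Cons.prems(1) tT Cons.prems(4)] .
  have aK2: "a \<in> known C2" using s2 Cons.prems(4) unfolding mono_cfg_def by auto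
  have ga2: "gval C2 a \<le> gval C a" using s2 Cons.prems(4) unfolding mono_cfg_def by auto
  have IH: "inv0 (fold (succ_step c upd h) ts C2) \<and> mono_cfg C2 (fold (succ_step c upd h) ts C2) \<and>
   (\<forall>x l y. (x,l,y) \<in> set ts \<longrightarrow> y \<in> known (fold (succ_step c upd h) ts C2)
        \<and> gval (fold (succ_step c upd h) ts C2) y \<le> gval C2 a + c l)"
    using Cons.IH[of C2] s2 Cons.prems aK2 by auto
  have eqf: "fold (succ_step c upd h) (t # ts) C = fold (succ_step c upd h) ts C2"
    by (simp add: t xa C2_def)
  define F where "F = fold (succ_step c upd h) ts C2"
  have bF: "b \<in> known F \<and> gval F b \<le> gval C a + c l"
  proof -
    have m: "mono_cfg C2 F" using IH unfolding F_def by blast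
    have "b \<in> known F" using m s2 unfolding mono_cfg_def by blast
    moreover have "gval F b \<le> gval C2 b" using m s2 unfolding mono_cfg_def by blast
    ultimately show ?thesis using s2 by simp
  qed
  have rest: "\<forall>x l y. (x,l,y) \<in> set ts \<longrightarrow> y \<in> known F \<and> gval F y \<le> gval C a + c l"
  proof (intro allI impI)
    fix x' l' y assume "(x',l',y) \<in> set ts"
    then have "y \<in> known F \<and> gval F y \<le> gval C2 a + c l'" using IH unfolding F_def by blast
    then show "y \<in> known F \<and> gval F y \<le> gval C a + c l'" using ga2 by simp
  qed
  have iF: "inv0 F" using IH unfolding F_def by blast
  have mF: "mono_cfg C F" using mono_trans s2 IH unfolding F_def by blast
  have aF: "\<forall>x l' y. (x,l',y) \<in> set (t # ts) \<longrightarrow> y \<in> known F \<and> gval F y \<le> gval C a + c l'"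
  proof (intro allI impI)
    fix x' l' y assume "(x',l',y) \<in> set (t # ts)"
    then consider "(x',l',y) = (a,l,b)" | "(x',l',y) \<in> set ts" using t xa by auto
    then show "y \<in> known F \<and> gval F y \<le> gval C a + c l'" using bF rest by cases auto
  qed
  show ?case unfolding eqf F_def[symmetric] using iF mF aF by blast
qed

lemma rem_mset: "x \<in># M \<Longrightarrow> x \<noteq> e \<Longrightarrow> x \<in># M - {#e#}"
  by (simp add: in_diff_count)


lemma inv0_intro:
  assumes "dom (pinf C) = known C" "known C \<subseteq> S" "closed C \<subseteq> known C"
    "\<forall>e\<in>#opn C. fst e \<in> known C"
    "reach_info T sI iota0 upd refine (hinf C) (known C)"
    "\<forall>y\<in>known C. \<exists>p. is_path T sI p y \<and> path_cost c p = gval C y"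
    "\<forall>x\<in>known C. x \<notin> closed C \<longrightarrow> hstar T c SG x < \<infinity> \<longrightarrow> (\<exists>hh. (x, gval C x, hh) \<in># opn C)"
    "\<forall>x\<in>closed C. hstar T c SG x < \<infinity> \<longrightarrow> (x, gval C x) \<in> set (hist C)"
  shows "inv0 C"
  using assms unfolding inv0_def by blast

lemma inv0D:
  assumes "inv0 C"
  shows "dom (pinf C) = known C" "known C \<subseteq> S" "closed C \<subseteq> known C"
    "\<forall>e\<in>#opn C. fst e \<in> known C"
    "reach_info T sI iota0 upd refine (hinf C) (known C)"
    "\<forall>y\<in>known C. \<exists>p. is_path T sI p y \<and> path_cost c p = gval C y"
    "\<forall>x\<in>known C. x \<notin> closed C \<longrightarrow> hstar T c SG x < \<infinity> \<longrightarrow> (\<exists>hh. (x, gval C x, hh) \<in># opn C)"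
    "\<forall>x\<in>closed C. hstar T c SG x < \<infinity> \<longrightarrow> (x, gval C x) \<in> set (hist C)"
  using assms unfolding inv0_def by blast+

lemma inv_init: "inv0 (da_init sI iota0 h) \<and> inv3 (da_init sI iota0 h)"
proof -
  have hf: "hstar T c SG sI < \<infinity> \<Longrightarrow> h sI iota0 < \<infinity>"
    using hfin[OF reach_info.init sIS] by simp
  have p0: "is_path T sI [] sI" "path_cost c [] = 0" by (simp_all add: path_cost_def)
  have "inv0 (da_init sI iota0 h)"
  proof (rule inv0_intro)
    show "\<forall>y\<in>known (da_init sI iota0 h). \<exists>p. is_path T sI p y \<and> path_cost c p = gval (da_init sI iota0 h) y"
    proof -
      have "\<exists>p. is_path T sI p sI \<and> path_cost c p = 0" using p0 by blast
      then show ?thesis by (simp add: da_init_def gval_def)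
    qed
    show "\<forall>x\<in>known (da_init sI iota0 h). x \<notin> closed (da_init sI iota0 h) \<longrightarrow> hstar T c SG x < \<infinity> \<longrightarrow>
       (\<exists>hh. (x, gval (da_init sI iota0 h) x, hh) \<in># opn (da_init sI iota0 h))"
      using hf by (auto simp: da_init_def gval_def)
  qed (auto simp: da_init_def sIS intro: reach_info.init)
  moreover have "inv3 (da_init sI iota0 h)" by (simp add: inv3_def da_init_def)
  ultimately show ?thesis by blast
qed

lemma step_inv:
  assumes st: "da_step c T SG upd refine h reeval C C'" and i0: "inv0 C" and i3: "inv3 C"
  shows "inv0 C' \<and> inv3 C'"
  using st
proof (cases rule: da_step.cases)
  case (skip e s gh hh)
  note D = inv0D[OF i0]
  have es: "e = (s, gh, hh)" and sc: "s \<in> closed C" using skip by blast+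
  have C': "C' = C\<lparr>opn := opn C - {#e#}\<rparr>" using skip by blast
  have gv: "gval C' = gval C" using C' by (simp add: gval_def fun_eq_iff)
  have I1': "\<forall>x\<in>known C. x \<notin> closed C \<longrightarrow> hstar T c SG x < \<infinity> \<longrightarrow> (\<exists>hh. (x, gval C x, hh) \<in># opn C - {#e#})"
  proof (intro ballI impI)
    fix x assume x: "x \<in> known C" "x \<notin> closed C" "hstar T c SG x < \<infinity>"
    then obtain hh' where "(x, gval C x, hh') \<in># opn C" using D(7) by blast
    moreover have "(x, gval C x, hh') \<noteq> e" using x es sc by auto
    ultimately have "(x, gval C x, hh') \<in># opn C - {#e#}" by (rule rem_mset)
    then show "\<exists>hh. (x, gval C x, hh) \<in># opn C - {#e#}" by (rule exI)
  qed
  have o: "\<forall>e'\<in>#opn C - {#e#}. fst e' \<in> known C"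
  proof
    fix e' assume "e' \<in># opn C - {#e#}"
    then have "e' \<in># opn C" by (rule in_diffD)
    then show "fst e' \<in> known C" using D(4) by blast
  qed
  have "inv0 C'"
  proof -
    have f: "pinf C' = pinf C" "known C' = known C" "closed C' = closed C" "hist C' = hist C"
      "hinf C' = hinf C" "opn C' = opn C - {#e#}" by (simp_all add: C')
    show ?thesis apply (rule inv0_intro) unfolding f gv using D I1' o by blast+
  qed
  moreover have "inv3 C'" proof -
    have f: "known C' = known C" "hist C' = hist C" by (simp_all add: C')
    show ?thesis using i3 unfolding inv3_def gv f .
  qed
  ultimately show ?thesis by blast
next
  case (reeval e s gh hh \<iota>1)
  note D = inv0D[OF i0]
  have eo: "e \<in># opn C" and es: "e = (s, gh, hh)" and sc: "s \<notin> closed C" and i1: "\<iota>1 = refine (hinf C) s"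
    using reeval by blast+
  have sK: "s \<in> known C" using D(4) eo es by force
  have sS: "s \<in> S" using D(2) sK by blast
  have ri: "reach_info T sI iota0 upd refine \<iota>1 (known C)"
    unfolding i1 by (rule reach_info.refine[OF D(5) sK])
  define N where "N = opn C - {#e#} + (if h s \<iota>1 < \<infinity> then {#(s, gval C s, h s \<iota>1)#} else {#})"
  have C': "C' = C\<lparr>hinf := \<iota>1, opn := N\<rparr>" using reeval unfolding N_def by blast
  have gv: "gval C' = gval C" using C' by (simp add: gval_def fun_eq_iff)
  have I1': "\<forall>x\<in>known C. x \<notin> closed C \<longrightarrow> hstar T c SG x < \<infinity> \<longrightarrow> (\<exists>hh. (x, gval C x, hh) \<in># N)"
  proof (intro ballI impI)
    fix x assume x: "x \<in> known C" "x \<notin> closed C" "hstar T c SG x < \<infinity>"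
    show "\<exists>hh. (x, gval C x, hh) \<in># N"
    proof (cases "x = s")
      case True
      have "h s \<iota>1 \<noteq> \<infinity>" using hfin[OF ri sS] x True by simp
      then have "h s \<iota>1 < \<infinity>" by simp
      then show ?thesis unfolding N_def using True by auto
    next
      case False
      obtain hh' where "(x, gval C x, hh') \<in># opn C" using D(7) x by blast
      moreover have "(x, gval C x, hh') \<noteq> e" using False es by auto
      ultimately have "(x, gval C x, hh') \<in># opn C - {#e#}" by (rule rem_mset)
      then show ?thesis unfolding N_def by auto
    qed
  qed
  have o: "\<forall>e\<in>#N. fst e \<in> known C"
  proof
    fix e' assume "e' \<in># N"
    then have "e' \<in># opn C - {#e#} \<or> e' = (s, gval C s, h s \<iota>1)" unfolding N_def by (auto split: if_splits)
    then show "fst e' \<in> known C" using D(4) sK in_diffD[of e' "opn C" "{#e#}"] by auto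
  qed
  have "inv0 C'"
  proof -
    have f: "pinf C' = pinf C" "known C' = known C" "closed C' = closed C" "hist C' = hist C"
      "hinf C' = \<iota>1" "opn C' = N" by (simp_all add: C')
    show ?thesis apply (rule inv0_intro) unfolding f gv using D I1' o ri by blast+
  qed
  moreover have "inv3 C'" proof -
    have f: "known C' = known C" "hist C' = hist C" by (simp_all add: C')
    show ?thesis using i3 unfolding inv3_def gv f .
  qed
  ultimately show ?thesis by blast
next
  case (expand e s gh hh \<iota>1 ts)
  note D = inv0D[OF i0]
  have eo: "e \<in># opn C" and es: "e = (s, gh, hh)" and sc: "s \<notin> closed C" and i1: "\<iota>1 = refine (hinf C) s"
    and dts: "set ts = {t \<in> T. fst t = s}"
    using expand by blast+
  have sK: "s \<in> known C" using D(4) eo es by force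
  have ri: "reach_info T sI iota0 upd refine \<iota>1 (known C)"
    unfolding i1 by (rule reach_info.refine[OF D(5) sK])
  define C0 where "C0 = C\<lparr>hinf := \<iota>1, opn := opn C - {#e#}, closed := insert s (closed C),
                  hist := hist C @ [(s, gval C s)]\<rparr>"
  have C': "C' = fold (succ_step c upd h) ts C0" using expand unfolding C0_def by blast
  have gv: "gval C0 = gval C" by (simp add: C0_def gval_def fun_eq_iff)
  have I1': "\<forall>x\<in>known C. x \<notin> insert s (closed C) \<longrightarrow> hstar T c SG x < \<infinity> \<longrightarrow> (\<exists>hh. (x, gval C x, hh) \<in># opn C - {#e#})"
  proof (intro ballI impI)
    fix x assume x: "x \<in> known C" "x \<notin> insert s (closed C)" "hstar T c SG x < \<infinity>"
    then obtain hh' where "(x, gval C x, hh') \<in># opn C" using D(7) by blast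
    moreover have "(x, gval C x, hh') \<noteq> e" using x es by auto
    ultimately have "(x, gval C x, hh') \<in># opn C - {#e#}" by (rule rem_mset)
    then show "\<exists>hh. (x, gval C x, hh) \<in># opn C - {#e#}" by (rule exI)
  qed
  have I2': "\<forall>x\<in>insert s (closed C). hstar T c SG x < \<infinity> \<longrightarrow> (x, gval C x) \<in> set (hist C @ [(s, gval C s)])"
    using D(8) by auto
  have o: "\<forall>e'\<in>#opn C - {#e#}. fst e' \<in> known C"
  proof
    fix e' assume "e' \<in># opn C - {#e#}"
    then have "e' \<in># opn C" by (rule in_diffD)
    then show "fst e' \<in> known C" using D(4) by blast
  qed
  have i00: "inv0 C0"
  proof -
    have f: "pinf C0 = pinf C" "known C0 = known C" "closed C0 = insert s (closed C)"
      "hist C0 = hist C @ [(s, gval C s)]"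
      "hinf C0 = \<iota>1" "opn C0 = opn C - {#e#}" by (simp_all add: C0_def)
    have cl: "insert s (closed C) \<subseteq> known C" using D(3) sK by blast
    show ?thesis apply (rule inv0_intro) unfolding f gv using D I1' I2' o ri cl by blast+
  qed
  have tsT: "set ts \<subseteq> T" and tsa: "\<forall>t\<in>set ts. fst t = s" using dts by auto
  have sK0: "s \<in> known C0" using sK by (simp add: C0_def)
  note F = fold_inv[OF i00 tsT tsa sK0]
  have iF: "inv0 C'" using F C' by simp
  have mF: "mono_cfg C0 C'" using F C' by simp
  have aF: "\<forall>x l y. (x,l,y) \<in> set ts \<longrightarrow> y \<in> known C' \<and> gval C' y \<le> gval C s + c l"
    using F C' gv by simp
  have hC': "hist C' = hist C @ [(s, gval C s)]" using mF by (simp add: mono_cfg_def C0_def)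
  have kC: "known C \<subseteq> known C'" and gC: "\<forall>y\<in>known C. gval C' y \<le> gval C y"
    using mF gv by (simp_all add: mono_cfg_def C0_def)
  have "inv3 C'" unfolding inv3_def
  proof (intro allI impI)
    fix x g l y assume xg: "(x,g) \<in> set (hist C')" and xT: "(x,l,y) \<in> T"
    from xg hC' consider "(x,g) \<in> set (hist C)" | "x = s" "g = gval C s" by auto
    then show "y \<in> known C' \<and> gval C' y \<le> g + c l"
    proof cases
      case 1
      then have "y \<in> known C \<and> gval C y \<le> g + c l" using i3 xT unfolding inv3_def by blast
      then show ?thesis using kC gC by fastforce
    next
      case 2
      then have "(x,l,y) \<in> set ts" using xT dts by auto
      then show ?thesis using aF 2 by blast
    qed
  qed
  then show ?thesis using iF by blast
qed

lemma reach_inv: "(da_step c T SG upd refine h reeval)\<^sup>*\<^sup>* (da_init sI iota0 h) C \<Longrightarrow> inv0 C \<and> inv3 C"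
  by (induction rule: rtranclp_induct) (auto simp: inv_init dest: step_inv)

lemma main:
  assumes reach: "(da_step c T SG upd refine h reeval)\<^sup>*\<^sup>* (da_init sI iota0 h) C"
    and st: "settled T c sI C s" and hs: "hstar T c SG s' < \<infinity>"
    and p: "is_path T sI ts s'" and opt: "ereal (path_cost c ts) = gstar T c sI s'"
    and ne: "ts \<noteq> []" and lt: "last ts = (s, l, s')"
  shows "(\<exists>g hh. (s', g, hh) \<in># opn C \<and> ereal g = gstar T c sI s') \<or> settled T c sI C s'"
proof -
  have R: "inv0 C" "inv3 C" using reach_inv[OF reach] by auto
  note D = inv0D[OF R(1)]
  obtain g where sg: "(s,g) \<in> set (hist C)" and gs: "ereal g = gstar T c sI s"
    using st unfolding settled_def by blast
  have tsd: "ts = butlast ts @ [(s,l,s')]" using ne lt by (metis append_butlast_last_id)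
  have "is_path T sI (butlast ts @ [(s,l,s')]) s'" using p tsd by metis
  then obtain y where p0: "is_path T sI (butlast ts) y" and p1: "is_path T y [(s,l,s')] s'"
    by auto
  have ys: "y = s" and tT: "(s,l,s') \<in> T" using p1 by auto
  have c0: "path_cost c (butlast ts @ [(s,l,s')]) = path_cost c (butlast ts) + c l" by simp
  have cost: "path_cost c ts = path_cost c (butlast ts) + c l" using c0 tsd by metis
  have k: "s' \<in> known C \<and> gval C s' \<le> g + c l" using R(2) sg tT unfolding inv3_def by blast
  have "ereal g \<le> ereal (path_cost c (butlast ts))" using gs gstar_le[where c=c, OF p0[unfolded ys]] by simp
  then have gl: "g \<le> path_cost c (butlast ts)" by simp
  have up: "ereal (gval C s') \<le> gstar T c sI s'"
  proof -
    have "gval C s' \<le> path_cost c ts" using k gl cost by linarith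
    then show ?thesis using opt by (metis ereal_less_eq(3))
  qed
  obtain q where q: "is_path T sI q s'" "path_cost c q = gval C s'" using D(6) k by blast
  have lo: "gstar T c sI s' \<le> ereal (gval C s')" using gstar_le[where c=c, OF q(1)] q(2) by simp
  have eq: "ereal (gval C s') = gstar T c sI s'" using up lo by (rule antisym)
  show ?thesis
  proof (cases "s' \<in> closed C")
    case True
    then have "(s', gval C s') \<in> set (hist C)" using D(8) hs by blast
    then show ?thesis unfolding settled_def using eq by blast
  next
    case False
    then obtain hh where "(s', gval C s', hh) \<in># opn C" using D(7) k hs by blast
    then show ?thesis using eq by blast
  qed
qed

end

theorem lemma2:
  fixes S :: "'s set" and L :: "'l set" and c :: "'l \<Rightarrow> real"
    and T :: "('s,'l) trans set" and sI :: 's and SG :: "'s set"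
    and iota0 :: 'i and upd :: "'i \<Rightarrow> ('s,'l) trans \<Rightarrow> 'i" and refine :: "'i \<Rightarrow> 's \<Rightarrow> 'i"
    and h :: "'s \<Rightarrow> 'i \<Rightarrow> ereal" and reeval :: bool
    and C :: "('s,'l,'i) cfg" and s s' :: 's and l :: 'l and ts :: "('s,'l) trans list"
  assumes "trans_sys S L c T sI SG"
    and "dyn_heuristic h"
    and "dyn_safe S T c sI SG iota0 upd refine h"
    and "(da_step c T SG upd refine h reeval)\<^sup>*\<^sup>* (da_init sI iota0 h) C"
    and "opn C \<noteq> {#}"
    and "settled T c sI C s"
    and "hstar T c SG s' < \<infinity>"
    and "is_path T sI ts s'" and "ereal (path_cost c ts) = gstar T c sI s'"
    and "ts \<noteq> []" and "last ts = (s, l, s')"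
  shows "(\<exists>g hh. (s', g, hh) \<in># opn C \<and> ereal g = gstar T c sI s') \<or> settled T c sI C s'"
proof -
  have TS: "T \<subseteq> S \<times> L \<times> S" and sIS: "sI \<in> S" using assms(1) unfolding trans_sys_def by auto
  show ?thesis using main[OF TS sIS assms(3) assms(4) assms(6) assms(7) assms(8) assms(9) assms(10) assms(11)] .
qed

end
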